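(* Let $E(q)=\prod_{k\ge1}(1-q^k)$ and $$X=\frac{E(q^2)^4E(q^3)^8}{E(q)^8E(q^6)^4}.$$ Let $U$ be the operator on formal Laurent series defined by $U\left(\sum_{n\ge n_0}a_nq^n\right)=\sum_{3n\ge n_0}a_{3n}q^n$. Then \begin{align*} U(X)&=10X-36X^2+27X^3,\\ U(X^2)&=-8X+306X^2-2160X^3+5508X^4-5832X^5+2187X^6,\\ U(X^3)&=X-360X^2+10566X^3-99144X^4+423549X^5-944784X^6\\ &\qquad+1141614X^7-708588X^8+177147X^9. \end{align*}
   Context: All identities are identities of formal power series in $q$ (equivalently of holomorphic functions of $\tau$ in the upper half plane with $q=e^{2\pi i\tau}$). *)

theory Defs
  imports "HOL-Computational_Algebra.Formal_Power_Series"
begin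

text \<open>Euler product E(q) = prod_{k>=1} (1 - q^k) as a formal power series.
  Its n-th coefficient is the n-th coefficient of the finite partial product
  up to k = n (factors with k > n do not affect coefficients of degree <= n).\<close>
definition eulerE :: "rat fps" where
  "eulerE = Abs_fps (\<lambda>n. fps_nth (\<Prod>k\<in>{1..n}. (1 - fps_X ^ k :: rat fps)) n)"

definition eulerE_at :: "nat \<Rightarrow> rat fps" where
  "eulerE_at m = fps_compose eulerE (fps_X ^ m)"

definition Xser :: "rat fps" where
  "Xser = eulerE_at 2 ^ 4 * eulerE_at 3 ^ 8 * inverse (eulerE_at 1 ^ 8 * eulerE_at 6 ^ 4)"

text \<open>U operator: sum a_n q^n |-> sum a_{3n} q^n (on power series, n_0 = 0).\<close>
definition opU :: "rat fps \<Rightarrow> rat fps" where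
  "opU f = Abs_fps (\<lambda>n. fps_nth f (3 * n))"

end

theory Submission
  imports Defs
begin
unbundle fps_syntax

definition cg :: "nat \<Rightarrow> rat fps \<Rightarrow> rat fps \<Rightarrow> bool" where
  "cg n f g \<longleftrightarrow> (\<forall>i<n. f $ i = g $ i)"

lemma cg_dvd: "cg n f g \<longleftrightarrow> fps_X ^ n dvd (f - g)"
proof
  assume "cg n f g"
  hence "\<forall>i<n. (f - g) $ i = 0" by (simp add: cg_def)
  hence "f - g = fps_X ^ n * fps_shift n (f - g)"
    by (intro fps_ext) (simp add: fps_X_power_mult_nth)
  thus "fps_X ^ n dvd (f - g)" by (metis dvdI)
next
  assume "fps_X ^ n dvd (f - g)"
  then obtain d where "f - g = fps_X ^ n * d" by (auto elim: dvdE)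
  hence "\<forall>i<n. (f - g) $ i = 0" by (simp add: fps_X_power_mult_nth)
  thus "cg n f g" by (simp add: cg_def)
qed

lemma cg_refl[simp]: "cg n f f" by (simp add: cg_def)
lemma cg_sym: "cg n f g \<Longrightarrow> cg n g f" by (simp add: cg_def)
lemma cg_trans: "cg n f g \<Longrightarrow> cg n g h \<Longrightarrow> cg n f h" by (simp add: cg_def)
lemma cg_mono: "m \<le> n \<Longrightarrow> cg n f g \<Longrightarrow> cg m f g" by (simp add: cg_def)
lemma cg_eq: "(\<And>n. cg n f g) \<Longrightarrow> f = g"
  by (intro fps_ext) (meson cg_def lessI)

lemma cg_add: "cg n f f' \<Longrightarrow> cg n g g' \<Longrightarrow> cg n (f + g) (f' + g')"
  by (simp add: cg_def)
lemma cg_diff: "cg n f f' \<Longrightarrow> cg n g g' \<Longrightarrow> cg n (f - g) (f' - g')"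
  by (simp add: cg_def)
lemma cg_mult: "cg n f f' \<Longrightarrow> cg n g g' \<Longrightarrow> cg n (f * g) (f' * g')"
proof -
  assume a: "cg n f f'" "cg n g g'"
  have "f * g - f' * g' = (f - f') * g + f' * (g - g')" by (simp add: algebra_simps)
  moreover have "fps_X ^ n dvd (f - f') * g + f' * (g - g')"
    using a by (simp add: cg_dvd)
  ultimately show ?thesis by (simp add: cg_dvd)
qed
lemma cg_power: "cg n f f' \<Longrightarrow> cg n (f ^ k) (f' ^ k)"
  by (induction k) (simp_all add: cg_mult)

lemma cg_prod: "finite S \<Longrightarrow> (\<And>k. k \<in> S \<Longrightarrow> cg n (f k) (g k)) \<Longrightarrow> cg n (prod f S) (prod g S)"
  by (induction S rule: finite_induct) (simp_all add: cg_mult)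

lemma cg_inverse:
  assumes "f $ 0 \<noteq> 0" "g $ 0 \<noteq> 0" "cg n f g"
  shows "cg n (inverse f) (inverse g)"
proof -
  have "inverse f - inverse g = inverse f * inverse g * (g - f)"
    using assms(1,2) by (simp add: algebra_simps inverse_mult_eq_1 inverse_mult_eq_1'
        mult.assoc[symmetric])
  moreover have "fps_X ^ n dvd inverse f * inverse g * (g - f)"
    using assms(3) cg_sym by (simp add: cg_dvd)
  ultimately show ?thesis by (simp add: cg_dvd)
qed



definition P :: "nat \<Rightarrow> nat \<Rightarrow> rat fps" where
  "P m n = (\<Prod>k\<in>{1..n}. 1 - fps_X ^ (m * k))"

lemma up_nth:
  assumes "m > 0"
  shows "(g oo fps_X ^ m) $ n = (if m dvd n then g $ (n div m) else (0::rat))"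
proof -
  have "(g oo fps_X ^ m) $ n = (\<Sum>i=0..n. g $ i * (if n = m * i then 1 else 0))"
    by (simp add: fps_compose_nth power_mult[symmetric] mult.commute)
  also have "\<dots> = (\<Sum>i\<in>(if m dvd n then {n div m} else {}). g $ i)"
    using assms by (intro sum.mono_neutral_cong_right) (auto split: if_splits elim!: dvdE)
  finally show ?thesis by simp
qed

lemma cg_up: "m > 0 \<Longrightarrow> cg n f g \<Longrightarrow> cg (m * n) (f oo fps_X ^ m) (g oo fps_X ^ m)"
  unfolding cg_def
  by (auto simp: up_nth elim!: dvdE)

lemma up0: "m > 0 \<Longrightarrow> (fps_X ^ m :: rat fps) $ 0 = 0" by simp

lemma up_mult: "m > 0 \<Longrightarrow> (f * g) oo fps_X ^ m = (f oo fps_X ^ m) * (g oo fps_X ^ m :: rat fps)"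
  by (rule fps_compose_mult_distrib) simp
lemma up_power: "m > 0 \<Longrightarrow> ((f::rat fps) ^ k) oo fps_X ^ m = (f oo fps_X ^ m) ^ k"
  by (simp add: fps_compose_power)
lemma up_prod: "m > 0 \<Longrightarrow> prod f S oo fps_X ^ m = (\<Prod>k\<in>S. f k oo fps_X ^ m :: rat fps)"
  by (rule fps_compose_prod_distrib) simp
lemma up_Xpow: "m > 0 \<Longrightarrow> (fps_X ^ k :: rat fps) oo fps_X ^ m = fps_X ^ (m * k)"
  by (simp add: fps_compose_power[symmetric] power_mult)
lemma up_inverse: "m > 0 \<Longrightarrow> f $ 0 \<noteq> 0 \<Longrightarrow> inverse f oo fps_X ^ m = inverse (f oo fps_X ^ m :: rat fps)"
  by (rule fps_inverse_compose) simp_all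

lemma cg_one_prod: "finite S \<Longrightarrow> (\<And>k. k \<in> S \<Longrightarrow> cg n (f k) 1) \<Longrightarrow> cg n (prod f S) 1"
  using cg_prod[of S n f "\<lambda>_. 1"] by simp

lemma P_split: "i \<le> n \<Longrightarrow> P m n = P m i * (\<Prod>k\<in>{i+1..n}. 1 - fps_X ^ (m * k))"
  unfolding P_def
  by (subst prod.union_disjoint[symmetric]) (auto intro!: prod.cong)

lemma cg_P_stable: "m > 0 \<Longrightarrow> i \<le> n \<Longrightarrow> cg (m * Suc i) (P m n) (P m i)"
proof -
  assume m: "m > 0" and i: "i \<le> n"
  have "cg (m * Suc i) (\<Prod>k\<in>{i+1..n}. 1 - fps_X ^ (m * k)) 1"
  proof (rule cg_one_prod)
    fix k assume "k \<in> {i+1..n}"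
    hence "m * Suc i \<le> m * k" using m by (intro mult_le_mono2) auto
    thus "cg (m * Suc i) (1 - fps_X ^ (m * k)) 1" by (auto simp: cg_def)
  qed simp
  hence "cg (m * Suc i) (P m i * (\<Prod>k\<in>{i+1..n}. 1 - fps_X ^ (m * k))) (P m i * 1)"
    by (intro cg_mult) simp_all
  thus ?thesis using P_split[OF i, of m] by simp
qed

lemma cg_euler: "cg (Suc n) eulerE (P 1 n)"
  unfolding cg_def
proof (intro allI impI)
  fix i assume "i < Suc n"
  hence "cg (Suc i) (P 1 n) (P 1 i)" using cg_P_stable[of 1 i n] by simp
  hence "P 1 n $ i = P 1 i $ i" by (simp add: cg_def)
  thus "eulerE $ i = P 1 n $ i" by (simp add: eulerE_def P_def)
qed

lemma P_up: "m > 0 \<Longrightarrow> P 1 n oo fps_X ^ m = P m n"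
  unfolding P_def by (simp add: up_prod fps_compose_sub_distrib up_Xpow)

lemma cg_eulerE_at: "m > 0 \<Longrightarrow> cg (m * Suc n) (eulerE_at m) (P m n)"
  unfolding eulerE_at_def using cg_up[OF _ cg_euler, of m n] P_up[of m n] by simp

lemma prod0: "finite S \<Longrightarrow> (prod f S :: rat fps) $ 0 = (\<Prod>k\<in>S. f k $ 0)"
  by (induction S rule: finite_induct) simp_all

lemma P0[simp]: "m > 0 \<Longrightarrow> P m n $ 0 = 1"
  unfolding P_def by (simp add: prod0)

lemma E0[simp]: "eulerE_at m $ 0 = 1" "eulerE $ 0 = 1"
  unfolding eulerE_at_def by (simp_all add: eulerE_def)



fun G :: "'a::comm_ring_1 \<Rightarrow> nat \<Rightarrow> nat \<Rightarrow> 'a" where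
  "G p 0 0 = 1"
| "G p 0 (Suc k) = 0"
| "G p (Suc m) 0 = 1"
| "G p (Suc m) (Suc k) = p ^ Suc k * G p m (Suc k) + G p m k"

lemma G_zero: "m < k \<Longrightarrow> G p m k = 0"
  by (induction p m k rule: G.induct) auto

lemma G_0[simp]: "G p m 0 = 1"
  by (cases m) auto

lemma G_diag: "G p m m = 1"
  by (induction m) (simp_all add: G_zero)

fun tri :: "nat \<Rightarrow> nat" where
  "tri 0 = 0"
| "tri (Suc k) = tri k + k"

lemma qbinom:
  fixes p x y :: "'a::comm_ring_1"
  shows "(\<Prod>i<m. y + x * p ^ i) = (\<Sum>k\<le>m. G p m k * p ^ tri k * x ^ k * y ^ (m - k))"
proof (induction m arbitrary: x)
  case 0
  then show ?case by simp
next
  case (Suc m)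
  have "(\<Prod>i<Suc m. y + x * p ^ i) = (y + x) * (\<Prod>i<m. y + (x * p) * p ^ i)"
    by (subst prod.lessThan_Suc_shift) (simp add: mult.assoc)
  also have "\<dots> = (y + x) * (\<Sum>k\<le>m. G p m k * p ^ tri k * (x * p) ^ k * y ^ (m - k))"
    by (simp only: Suc)
  also have "\<dots> = (\<Sum>k\<le>m. G p m k * p ^ k * p ^ tri k * x ^ k * y ^ (Suc m - k))
                + (\<Sum>k\<le>m. G p m k * p ^ tri (Suc k) * x ^ Suc k * y ^ (Suc m - Suc k))"
    by (simp add: distrib_right sum_distrib_left Suc_diff_le power_add power_mult_distrib
        algebra_simps sum.distrib)
  also have "(\<Sum>k\<le>m. G p m k * p ^ tri (Suc k) * x ^ Suc k * y ^ (Suc m - Suc k))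
      = (\<Sum>k\<le>Suc m. (if k = 0 then 0 else G p m (k - 1)) * p ^ tri k * x ^ k * y ^ (Suc m - k))"
    by (subst sum.atMost_Suc_shift) simp
  also have "(\<Sum>k\<le>m. G p m k * p ^ k * p ^ tri k * x ^ k * y ^ (Suc m - k))
      = (\<Sum>k\<le>Suc m. G p m k * p ^ k * p ^ tri k * x ^ k * y ^ (Suc m - k))"
    by (simp add: G_zero)
  also have "(\<Sum>k\<le>Suc m. G p m k * p ^ k * p ^ tri k * x ^ k * y ^ (Suc m - k)) +
      (\<Sum>k\<le>Suc m. (if k = 0 then 0 else G p m (k - 1)) * p ^ tri k * x ^ k * y ^ (Suc m - k))
      = (\<Sum>k\<le>Suc m. G p (Suc m) k * p ^ tri k * x ^ k * y ^ (Suc m - k))"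
    by (subst sum.distrib[symmetric], intro sum.cong) (auto simp: algebra_simps gr0_conv_Suc)
  finally show ?case .
qed

definition qp :: "'a::comm_ring_1 \<Rightarrow> nat \<Rightarrow> 'a" where
  "qp p n = (\<Prod>i\<in>{1..n}. 1 - p ^ i)"

lemma qp_Suc: "qp p (Suc n) = qp p n * (1 - p ^ Suc n)"
  unfolding qp_def by (simp add: prod.nat_ivl_Suc')

lemma G_prod: "k \<le> m \<Longrightarrow> G p m k * qp p k * qp p (m - k) = qp p m"
proof (induction m arbitrary: k)
  case 0
  then show ?case by (simp add: qp_def)
next
  case (Suc m)
  show ?case
  proof (cases k)
    case 0
    then show ?thesis by (simp add: qp_def)
  next
    case (Suc k')
    show ?thesis
    proof (cases "k' = m")
      case True
      then show ?thesis using Suc by (simp add: G_diag qp_def)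
    next
      case False
      with Suc \<open>k \<le> Suc m\<close> have k': "Suc k' \<le> m" by simp
      have e1: "m - k' = Suc (m - Suc k')" using k' by simp
      have IH1: "G p m (Suc k') * qp p (Suc k') * qp p (m - Suc k') = qp p m"
        using Suc.IH[OF k'] .
      have IH2: "G p m k' * qp p k' * qp p (m - k') = qp p m"
        using Suc.IH k' by simp
      have "G p (Suc m) k * qp p k * qp p (Suc m - k)
          = p ^ Suc k' * (G p m (Suc k') * qp p (Suc k') * qp p (m - Suc k')) * (1 - p ^ (m - k'))
            + (G p m k' * qp p k' * qp p (m - k')) * (1 - p ^ Suc k')"
        using Suc e1 by (simp add: qp_Suc algebra_simps)
      also have "\<dots> = qp p m * (p ^ Suc k' * (1 - p ^ (m - k')) + (1 - p ^ Suc k'))"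
        by (simp only: IH1 IH2) (simp add: algebra_simps)
      also have "p ^ Suc k' * (1 - p ^ (m - k')) = p ^ Suc k' - p ^ Suc m"
        using k' by (simp add: algebra_simps power_add[symmetric])
      finally show ?thesis by (simp add: qp_Suc)
    qed
  qed
qed



definition Q :: "nat \<Rightarrow> rat fps" where
  "Q n = (\<Prod>j<n. 1 - fps_X ^ (2 * j + 1))"

definition dd :: "nat \<Rightarrow> nat \<Rightarrow> nat" where
  "dd k n = (if k \<le> n then n - k else k - n)"

lemma tri2: "2 * tri k = k * (k - 1)"
  by (induction k) (auto simp: algebra_simps elim: not0_implies_Suc)

lemma prodX: "(\<Prod>i<n. (fps_X :: rat fps) ^ (2 * i)) = fps_X ^ (2 * tri n)"
  by (induction n) (simp_all add: power_add[symmetric] algebra_simps)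

lemma first_half:
  "(\<Prod>i<n. (fps_X:: rat fps) ^ (2 * n - 1) + (-1) * (fps_X ^ 2) ^ i)
     = (-1) ^ n * fps_X ^ (2 * tri n) * Q n"
proof -
  have "(\<Prod>i<n. (fps_X:: rat fps) ^ (2 * n - 1) + (-1) * (fps_X ^ 2) ^ i)
      = (\<Prod>i<n. (-1) * fps_X ^ (2 * i) * (1 - fps_X ^ (2 * (n - Suc i) + 1)))"
  proof (intro prod.cong refl)
    fix i assume "i \<in> {..<n}"
    hence "2 * n - 1 = 2 * i + (2 * (n - Suc i) + 1)" by auto
    hence e: "(fps_X::rat fps) ^ (2 * n - 1) = fps_X ^ (2 * i) * fps_X ^ (2 * (n - Suc i) + 1)"
      by (metis power_add)
    have f: "(fps_X ^ 2) ^ i = (fps_X::rat fps) ^ (2 * i)" by (simp add: power_mult)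
    show "(fps_X:: rat fps) ^ (2 * n - 1) + (-1) * (fps_X ^ 2) ^ i
        = (-1) * fps_X ^ (2 * i) * (1 - fps_X ^ (2 * (n - Suc i) + 1))"
      by (simp only: e f) (simp add: algebra_simps)
  qed
  also have "\<dots> = (\<Prod>i<n. (-1::rat fps)) * (\<Prod>i<n. fps_X ^ (2 * i)) * (\<Prod>i<n. 1 - fps_X ^ (2 * (n - Suc i) + 1))"
    by (simp only: prod.distrib)
  also have "(\<Prod>i<n. (-1::rat fps)) = (-1) ^ n" by simp
  also have "(\<Prod>i<n. (1::rat fps) - fps_X ^ (2 * (n - Suc i) + 1)) = Q n"
    unfolding Q_def by (rule prod.nat_diff_reindex[where g = "\<lambda>j. 1 - fps_X ^ (2 * j + 1)"])
  finally show ?thesis by (simp add: prodX)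
qed

lemma second_half:
  assumes "n \<ge> 1"
  shows "(\<Prod>i\<in>{n..<2*n}. (fps_X:: rat fps) ^ (2 * n - 1) + (-1) * (fps_X ^ 2) ^ i)
     = fps_X ^ ((2 * n - 1) * n) * Q n"
proof -
  have "{n..<2*n} = {0+n..<n+n}" by (simp add: mult_2)
  hence "(\<Prod>i\<in>{n..<2*n}. (fps_X:: rat fps) ^ (2 * n - 1) + (-1) * (fps_X ^ 2) ^ i)
      = (\<Prod>j\<in>{0..<n}. (fps_X:: rat fps) ^ (2 * n - 1) + (-1) * (fps_X ^ 2) ^ (j + n))"
    by (simp only: prod.shift_bounds_nat_ivl)
  also have "\<dots> = (\<Prod>j\<in>{0..<n}. fps_X ^ (2 * n - 1) * (1 - fps_X ^ (2 * j + 1)))"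
  proof (intro prod.cong refl)
    fix j assume "j \<in> {0..<n}"
    hence "2 * (j + n) = (2 * n - 1) + (2 * j + 1)" using assms by auto
    hence e: "(fps_X::rat fps) ^ (2 * (j + n)) = fps_X ^ (2 * n - 1) * fps_X ^ (2 * j + 1)"
      by (metis power_add)
    have f: "(fps_X ^ 2) ^ (j + n) = (fps_X::rat fps) ^ (2 * (j + n))" by (simp only: power_mult)
    show "(fps_X:: rat fps) ^ (2 * n - 1) + (-1) * (fps_X ^ 2) ^ (j + n)
        = fps_X ^ (2 * n - 1) * (1 - fps_X ^ (2 * j + 1))"
      by (simp only: e f) (simp add: algebra_simps)
  qed
  also have "\<dots> = fps_X ^ ((2 * n - 1) * n) * Q n"
    by (simp add: prod.distrib Q_def atLeast0LessThan power_mult)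
  finally show ?thesis .
qed

lemma expo:
  assumes "k \<le> 2 * n" "n \<ge> 1"
  shows "2 * tri k + (2 * n - 1) * (2 * n - k) = (2 * tri n + (2 * n - 1) * n) + dd k n ^ 2"
proof -
  have a1: "int (2 * tri k) = int k * (int k - 1)"
    unfolding tri2 by (cases k) (simp_all add: algebra_simps)
  have a2: "int (2 * tri n) = int n * (int n - 1)"
    unfolding tri2 by (cases n) (simp_all add: algebra_simps)
  note a = a1 a2
  have b: "int (dd k n) = \<bar>int k - int n\<bar>" by (simp add: dd_def)
  have "int (2 * tri k + (2 * n - 1) * (2 * n - k))
      = int (2 * tri k) + (2 * int n - 1) * (2 * int n - int k)"
    using assms by (simp add: of_nat_diff)
  also have "\<dots> = int (2 * tri n) + (2 * int n - 1) * int n + (int k - int n)^2"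
    by (simp only: a) (simp add: algebra_simps power2_eq_square)
  also have "\<dots> = int ((2 * tri n + (2 * n - 1) * n) + dd k n ^ 2)"
    using assms by (simp add: of_nat_diff b)
  finally show ?thesis by (simp only: of_nat_eq_iff)
qed

lemma gauss_finite:
  assumes n: "n \<ge> 1"
  shows "(-1) ^ n * Q n ^ 2 = (\<Sum>k\<le>2*n. (-1) ^ k * fps_X ^ (dd k n ^ 2) * G (fps_X ^ 2) (2 * n) k)"
proof -
  let ?E = "2 * tri n + (2 * n - 1) * n"
  have "(\<Prod>i<2*n. (fps_X:: rat fps) ^ (2 * n - 1) + (-1) * (fps_X ^ 2) ^ i)
      = (\<Sum>k\<le>2*n. G (fps_X ^ 2) (2*n) k * (fps_X ^ 2) ^ tri k * (-1) ^ k * (fps_X ^ (2 * n - 1)) ^ (2 * n - k))"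
    by (rule qbinom)
  also have "\<dots> = fps_X ^ ?E * (\<Sum>k\<le>2*n. (-1) ^ k * fps_X ^ (dd k n ^ 2) * G (fps_X ^ 2) (2 * n) k)"
    unfolding sum_distrib_left
  proof (intro sum.cong refl)
    fix k assume "k \<in> {..2*n}"
    hence e: "2 * tri k + (2 * n - 1) * (2 * n - k) = ?E + dd k n ^ 2" using expo n by simp
    have X: "(fps_X ^ 2) ^ tri k * (fps_X ^ (2 * n - 1)) ^ (2 * n - k) = (fps_X ^ (?E + dd k n ^ 2) :: rat fps)"
      by (simp only: e[symmetric] power_mult[symmetric] power_add)
    have "G ((fps_X::rat fps) ^ 2) (2*n) k * (fps_X ^ 2) ^ tri k * (-1) ^ k * (fps_X ^ (2 * n - 1)) ^ (2 * n - k)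
        = (-1) ^ k * G (fps_X ^ 2) (2*n) k * ((fps_X ^ 2) ^ tri k * (fps_X ^ (2 * n - 1)) ^ (2 * n - k))"
      by (simp only: ac_simps)
    also have "\<dots> = (-1) ^ k * G (fps_X ^ 2) (2*n) k * (fps_X ^ ?E * fps_X ^ (dd k n ^ 2))"
      by (subst X) (simp only: power_add)
    also have "\<dots> = fps_X ^ ?E * ((-1) ^ k * fps_X ^ (dd k n ^ 2) * G (fps_X ^ 2) (2 * n) k)"
      by (simp only: ac_simps)
    finally show "G ((fps_X::rat fps) ^ 2) (2*n) k * (fps_X ^ 2) ^ tri k * (-1) ^ k * (fps_X ^ (2 * n - 1)) ^ (2 * n - k)
        = fps_X ^ ?E * ((-1) ^ k * fps_X ^ (dd k n ^ 2) * G (fps_X ^ 2) (2 * n) k)" .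
  qed
  finally have A: "(\<Prod>i<2*n. (fps_X:: rat fps) ^ (2 * n - 1) + (-1) * (fps_X ^ 2) ^ i)
      = fps_X ^ ?E * (\<Sum>k\<le>2*n. (-1) ^ k * fps_X ^ (dd k n ^ 2) * G (fps_X ^ 2) (2 * n) k)" .
  have "(\<Prod>i<2*n. (fps_X:: rat fps) ^ (2 * n - 1) + (-1) * (fps_X ^ 2) ^ i)
      = (\<Prod>i<n. (fps_X:: rat fps) ^ (2 * n - 1) + (-1) * (fps_X ^ 2) ^ i) *
        (\<Prod>i\<in>{n..<2*n}. (fps_X:: rat fps) ^ (2 * n - 1) + (-1) * (fps_X ^ 2) ^ i)"
    by (simp add: lessThan_atLeast0 prod.atLeastLessThan_concat)
  also have "\<dots> = fps_X ^ ?E * ((-1) ^ n * Q n ^ 2)"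
    by (simp only: first_half second_half[OF n] power_add) (simp add: algebra_simps power2_eq_square)
  finally have B: "(\<Prod>i<2*n. (fps_X:: rat fps) ^ (2 * n - 1) + (-1) * (fps_X ^ 2) ^ i)
      = fps_X ^ ?E * ((-1) ^ n * Q n ^ 2)" .
  from A B have "fps_X ^ ?E * ((-1) ^ n * Q n ^ 2) =
       fps_X ^ ?E * (\<Sum>k\<le>2*n. (-1) ^ k * fps_X ^ (dd k n ^ 2) * G (fps_X ^ 2) (2 * n) k)"
    by simp
  thus ?thesis by simp
qed



definition theta :: "rat fps" where
  "theta = Abs_fps (\<lambda>i. \<Sum>j\<in>{-int i..int i}. if j ^ 2 = int i then (-1) ^ nat \<bar>j\<bar> else 0)"

lemma sq_ge: "\<bar>j::int\<bar> \<le> j ^ 2"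
proof (cases "j = 0")
  case False
  hence "1 \<le> \<bar>j\<bar>" by simp
  hence "\<bar>j\<bar> * 1 \<le> \<bar>j\<bar> * \<bar>j\<bar>" by (intro mult_left_mono) simp_all
  thus ?thesis by (simp add: power2_eq_square abs_mult[symmetric])
qed simp

lemma theta_ext:
  assumes "i \<le> M"
  shows "theta $ i = (\<Sum>j\<in>{-int M..int M}. if j ^ 2 = int i then (-1) ^ nat \<bar>j\<bar> else (0::rat))"
  unfolding theta_def fps_nth_Abs_fps
proof (rule sum.mono_neutral_left)
  show "\<forall>j\<in>{-int M..int M} - {-int i..int i}.
      (if j ^ 2 = int i then (-1) ^ nat \<bar>j\<bar> else (0::rat)) = 0"
  proof
    fix j assume "j \<in> {-int M..int M} - {-int i..int i}"
    hence "\<bar>j\<bar> > int i" by auto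
    hence "j ^ 2 \<noteq> int i" using sq_ge[of j] by linarith
    thus "(if j ^ 2 = int i then (-1) ^ nat \<bar>j\<bar> else (0::rat)) = 0" by simp
  qed
qed (use assms in auto)

lemma sign_dd: "k \<le> 2 * n \<Longrightarrow> ((-1)::rat) ^ k = (-1) ^ n * (-1) ^ dd k n"
proof (cases "k \<le> n")
  case True
  hence "n = k + dd k n" by (simp add: dd_def)
  hence "((-1)::rat) ^ n * (-1) ^ dd k n = (-1) ^ k * ((-1) ^ dd k n) ^ 2"
    by (metis power_add power2_eq_square mult.assoc)
  moreover have "((-1::rat) ^ dd k n) ^ 2 = 1" by (cases "even (dd k n)") simp_all
  ultimately show ?thesis by simp
next
  case False
  hence "k = n + dd k n" by (simp add: dd_def)
  thus ?thesis by (metis power_add)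
qed

lemma neg1_pow: "((-1::rat fps) ^ k) = fps_const ((-1) ^ k)"
  by (simp add: fps_const_power[symmetric] fps_const_neg[symmetric])

lemma neg1_pow_nth[simp]: "((-1::rat fps) ^ k * f) $ i = (-1) ^ k * f $ i"
  by (simp add: neg1_pow)

lemma sumX_nth:
  assumes "i \<le> n"
  shows "(\<Sum>k\<le>2*n. (-1) ^ k * fps_X ^ (dd k n ^ 2) :: rat fps) $ i = (-1) ^ n * theta $ i"
proof -
  have "(\<Sum>k\<le>2*n. (-1) ^ k * fps_X ^ (dd k n ^ 2) :: rat fps) $ i
      = (\<Sum>k\<le>2*n. (-1) ^ n * (if (int k - int n) ^ 2 = int i then (-1) ^ nat \<bar>int k - int n\<bar> else 0))"
  proof (subst fps_sum_nth, intro sum.cong refl)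
    fix k assume k: "k \<in> {..2*n}"
    have d: "int (dd k n) = \<bar>int k - int n\<bar>" by (simp add: dd_def)
    have "(dd k n ^ 2 = i) = ((int k - int n) ^ 2 = int i)"
      by (metis d of_nat_eq_iff of_nat_power power2_abs)
    moreover have "nat \<bar>int k - int n\<bar> = dd k n" using d by simp
    ultimately show "((-1) ^ k * fps_X ^ (dd k n ^ 2) :: rat fps) $ i
      = (-1) ^ n * (if (int k - int n) ^ 2 = int i then (-1) ^ nat \<bar>int k - int n\<bar> else 0)"
      using sign_dd[of k n] k by (auto simp: fps_X_power_iff)
  qed
  also have "\<dots> = (-1) ^ n * (\<Sum>j\<in>{-int n..int n}. if j ^ 2 = int i then (-1) ^ nat \<bar>j\<bar> else (0::rat))"
    unfolding sum_distrib_left[symmetric]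
    by (intro arg_cong[where f = "\<lambda>x. (-1) ^ n * x"],
        rule sum.reindex_bij_witness[where i = "\<lambda>j. nat (j + int n)" and j = "\<lambda>k. int k - int n"]) auto
  also have "\<dots> = (-1) ^ n * theta $ i" using theta_ext[OF assms] by simp
  finally show ?thesis .
qed

lemma cg_sum: "(\<And>k. k \<in> S \<Longrightarrow> cg n (f k) (g k)) \<Longrightarrow> cg n (sum f S) (sum g S)"
  unfolding cg_def by (auto simp: fps_sum_nth intro: sum.cong)

lemma cg_Xpow: "M \<le> d \<Longrightarrow> cg M (fps_X ^ d * f) (fps_X ^ d * g)"
  unfolding cg_def by (simp add: fps_X_power_mult_nth)

lemma qp_P: "qp ((fps_X :: rat fps) ^ 2) j = P 2 j"
  unfolding qp_def P_def by (simp add: power_mult)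

abbreviation E1 where "E1 \<equiv> eulerE"
abbreviation E2 where "E2 \<equiv> eulerE_at 2"

lemma G_inv:
  assumes "k \<le> m"
  shows "G ((fps_X :: rat fps) ^ 2) m k = P 2 m * inverse (P 2 k) * inverse (P 2 (m - k))"
proof -
  have "G ((fps_X :: rat fps) ^ 2) m k * P 2 k * P 2 (m - k) = P 2 m"
    using G_prod[OF assms, of "(fps_X::rat fps) ^ 2"] by (simp add: qp_P)
  hence "G ((fps_X :: rat fps) ^ 2) m k * P 2 k * P 2 (m - k) * inverse (P 2 k) * inverse (P 2 (m - k))
      = P 2 m * inverse (P 2 k) * inverse (P 2 (m - k))" by simp
  thus ?thesis
    by (simp add: mult.assoc inverse_mult_eq_1' mult.left_commute[of "P 2 (m-k)"])
qed

lemma cg_P2: "M \<le> 2 * Suc j \<Longrightarrow> cg M (P 2 j) E2"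
  using cg_mono[OF _ cg_eulerE_at[of 2 j]] cg_sym by auto

lemma cg_G:
  assumes "k \<le> 2 * n" "dd k n ^ 2 < M" "2 * M < n"
  shows "cg M (G ((fps_X :: rat fps) ^ 2) (2 * n) k) (inverse E2)"
proof -
  have "dd k n \<le> dd k n ^ 2" by (simp add: power2_eq_square)
  hence "dd k n < M" using assms(2) by simp
  hence k1: "M \<le> 2 * Suc k" and k2: "M \<le> 2 * Suc (2 * n - k)" using assms(1,3)
    by (auto simp: dd_def split: if_splits)
  have m: "M \<le> 2 * Suc (2 * n)" using assms by simp
  have "cg M (P 2 (2 * n) * inverse (P 2 k) * inverse (P 2 (2 * n - k))) (E2 * inverse E2 * inverse E2)"
    by (intro cg_mult cg_inverse cg_P2 k1 k2 m) simp_all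
  moreover have "E2 * inverse E2 = 1" by (simp add: inverse_mult_eq_1')
  ultimately show ?thesis using G_inv[OF assms(1)] by simp
qed

lemma Q_P: "Q n * P 2 n = P 1 (2 * n)"
proof (induction n)
  case 0
  then show ?case by (simp add: Q_def P_def)
next
  case (Suc n)
  have "Q (Suc n) * P 2 (Suc n) = (Q n * P 2 n) * ((1 - fps_X ^ (2 * n + 1)) * (1 - fps_X ^ (2 * Suc n)))"
    by (simp add: Q_def P_def prod.nat_ivl_Suc' algebra_simps)
  also have "\<dots> = P 1 (2 * Suc n)"
    by (simp only: Suc) (simp add: P_def prod.nat_ivl_Suc' algebra_simps)
  finally show ?case .
qed

lemma gauss: "theta * E2 = E1 ^ 2"
proof (rule cg_eq)
  fix M :: nat
  define n where "n = 2 * M + 2"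
  have n1: "n \<ge> 1" by (simp add: n_def)
  have "cg M ((-1) ^ n * Q n ^ 2) (\<Sum>k\<le>2*n. (-1) ^ k * fps_X ^ (dd k n ^ 2) * inverse E2)"
    unfolding gauss_finite[OF n1]
  proof (rule cg_sum)
    fix k assume k: "k \<in> {..2*n}"
    show "cg M ((-1) ^ k * fps_X ^ (dd k n ^ 2) * G (fps_X ^ 2) (2 * n) k)
               ((-1) ^ k * fps_X ^ (dd k n ^ 2) * inverse E2)"
    proof (cases "M \<le> dd k n ^ 2")
      case True
      then show ?thesis using cg_Xpow[OF True] by (simp add: mult.assoc mult.left_commute[of "(-1) ^ k"])
    next
      case False
      hence "cg M (G (fps_X ^ 2) (2 * n) k) (inverse E2)" using k by (intro cg_G) (auto simp: n_def)
      then show ?thesis by (intro cg_mult) simp_all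
    qed
  qed
  moreover have "cg M (\<Sum>k\<le>2*n. (-1) ^ k * fps_X ^ (dd k n ^ 2) * inverse E2) ((-1) ^ n * theta * inverse E2)"
  proof -
    have "cg M (\<Sum>k\<le>2*n. (-1) ^ k * fps_X ^ (dd k n ^ 2) :: rat fps) ((-1) ^ n * theta)"
      unfolding cg_def
    proof (intro allI impI)
      fix i assume "i < M"
      hence "i \<le> n" by (simp add: n_def)
      thus "(\<Sum>k\<le>2*n. (-1) ^ k * fps_X ^ (dd k n ^ 2) :: rat fps) $ i = ((-1) ^ n * theta) $ i"
        using sumX_nth[of i n] by (simp add: fps_mult_left_const_nth[symmetric]
            del: fps_mult_left_const_nth)
    qed
    thus ?thesis by (simp only: sum_distrib_right[symmetric]) (intro cg_mult; simp)
  qed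
  ultimately have "cg M ((-1) ^ n * Q n ^ 2) ((-1) ^ n * theta * inverse E2)" by (rule cg_trans)
  hence "cg M ((-1) ^ n * ((-1) ^ n * Q n ^ 2)) ((-1) ^ n * ((-1) ^ n * (theta * inverse E2)))"
    by (simp only: mult.assoc) (rule cg_mult[OF cg_refl])
  moreover have pm: "((-1::rat fps) ^ n * ((-1) ^ n * f)) = f" for f
    by (simp add: mult.assoc[symmetric] power_mult_distrib[symmetric])
  ultimately have A: "cg M (Q n ^ 2) (theta * inverse E2)"
    by (simp only: pm)
  have "cg M (E1 ^ 2) (P 1 (2 * n) ^ 2)"
    by (intro cg_power cg_mono[OF _ cg_euler]) (simp add: n_def)
  also have "P 1 (2 * n) ^ 2 = Q n ^ 2 * P 2 n ^ 2" by (simp only: Q_P[symmetric] power_mult_distrib)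
  finally have B: "cg M (E1 ^ 2) (Q n ^ 2 * P 2 n ^ 2)" .
  have "cg M (Q n ^ 2 * P 2 n ^ 2) (theta * inverse E2 * E2 ^ 2)"
    by (intro cg_mult A cg_power cg_P2) (simp add: n_def)
  also have "theta * inverse E2 * E2 ^ 2 = theta * E2"
    by (simp add: power2_eq_square mult.assoc inverse_mult_eq_1)
  finally show "cg M (theta * E2) (E1 ^ 2)" using B by (meson cg_sym cg_trans)
qed



abbreviation up3 :: "rat fps \<Rightarrow> rat fps" where "up3 g \<equiv> g oo fps_X ^ 3"

definition cp :: "nat \<Rightarrow> rat fps \<Rightarrow> rat fps" where
  "cp r g = Abs_fps (\<lambda>n. g $ (3 * n + r))"

lemma up3_nth: "up3 g $ n = (if 3 dvd n then g $ (n div 3) else 0)"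
  by (rule up_nth) simp

lemma Xr_up3_nth:
  "(fps_X ^ r * up3 g) $ m = (if r \<le> m \<and> 3 dvd (m - r) then g $ ((m - r) div 3) else 0)"
  by (simp add: fps_X_power_mult_nth up3_nth)

lemma up3_add: "up3 (f + g) = up3 f + up3 g" by (rule fps_compose_add_distrib)
lemma up3_diff: "up3 (f - g) = up3 f - up3 g" by (rule fps_compose_sub_distrib)
lemma up3_mult: "up3 (f * g) = up3 f * up3 g" by (rule up_mult) simp
lemma up3_power: "up3 (f ^ k) = up3 f ^ k" by (rule up_power) simp
lemma up3_X: "up3 fps_X = fps_X ^ 3" by simp
lemma up3_uminus: "up3 (- f) = - up3 f" by (rule fps_compose_uminus)

lemmas up3_simps = up3_add up3_diff up3_mult up3_power up3_X up3_uminus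

lemma up0_nth: "s < 3 \<Longrightarrow> up3 g $ (3 * n + s) = (if s = 0 then g $ n else 0)"
proof -
  assume "s < 3"
  hence "s = 0 \<or> s = 1 \<or> s = 2" by auto
  moreover have "\<not> 3 dvd (3 * n + 1)" "\<not> 3 dvd (3 * n + 2)" by presburger+
  ultimately show ?thesis by (auto simp: up3_nth)
qed

lemma up1_nth: "s < 3 \<Longrightarrow> (fps_X * up3 g) $ (3 * n + s) = (if s = 1 then g $ n else 0)"
proof -
  assume "s < 3"
  hence "s = 0 \<or> s = 1 \<or> s = 2" by auto
  moreover have "n > 0 \<Longrightarrow> \<not> 3 dvd (3 * n - 1)" "\<not> 3 dvd (3 * n + 1)" by presburger+
  ultimately show ?thesis by (auto simp: up3_nth fps_X_mult_nth)
qed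

lemma up2_nth: "s < 3 \<Longrightarrow> (fps_X ^ 2 * up3 g) $ (3 * n + s) = (if s = 2 then g $ n else 0)"
proof -
  assume "s < 3"
  hence "s = 0 \<or> s = 1 \<or> s = 2" by auto
  moreover have "n > 0 \<Longrightarrow> \<not> 3 dvd (3 * n - 2)" "n > 0 \<Longrightarrow> \<not> 3 dvd (3 * n + 1 - 2)" by presburger+
  moreover have "(3 * n + 2 - 2) = 3 * n" by simp
  ultimately show ?thesis by (auto simp: up3_nth fps_X_power_mult_nth)
qed

lemma coeff3:
  assumes "r < 3"
  shows "(up3 a + fps_X * up3 b + fps_X ^ 2 * up3 c) $ (3 * n + r) =
         (if r = 0 then a $ n else if r = 1 then b $ n else c $ n)"
proof -
  note h = up0_nth[OF assms, of a n] up1_nth[OF assms, of b n] up2_nth[OF assms, of c n]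
  have "(up3 a + fps_X * up3 b + fps_X ^ 2 * up3 c) $ (3 * n + r) =
     up3 a $ (3 * n + r) + (fps_X * up3 b) $ (3 * n + r) + (fps_X ^ 2 * up3 c) $ (3 * n + r)"
    by (simp only: fps_add_nth)
  also have "\<dots> = (if r = 0 then a $ n else 0) + (if r = 1 then b $ n else 0) + (if r = 2 then c $ n else 0)"
    by (simp only: h)
  also have "\<dots> = (if r = 0 then a $ n else if r = 1 then b $ n else c $ n)"
    using assms by auto
  finally show ?thesis .
qed

lemma decomp: "g = up3 (cp 0 g) + fps_X * up3 (cp 1 g) + fps_X ^ 2 * up3 (cp 2 g)"
proof (rule fps_ext)
  fix m :: nat
  define n where "n = m div 3"
  define r where "r = m mod 3"
  have r: "r < 3" by (simp add: r_def)
  have m: "m = 3 * n + r" by (simp add: n_def r_def)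
  have "(up3 (cp 0 g) + fps_X * up3 (cp 1 g) + fps_X ^ 2 * up3 (cp 2 g)) $ m
      = (if r = 0 then cp 0 g $ n else if r = 1 then cp 1 g $ n else cp 2 g $ n)"
    unfolding m by (rule coeff3[OF r])
  also have "\<dots> = g $ m"
  proof -
    have "r = 0 \<or> r = 1 \<or> r = 2" using r by auto
    thus ?thesis using m by (auto simp: cp_def)
  qed
  finally show "g $ m = (up3 (cp 0 g) + fps_X * up3 (cp 1 g) + fps_X ^ 2 * up3 (cp 2 g)) $ m" ..
qed

lemma uniq:
  assumes "g = up3 a + fps_X * up3 b + fps_X ^ 2 * up3 c"
  shows "cp 0 g = a" "cp 1 g = b" "cp 2 g = c"
  using assms coeff3[of 0 a b c] coeff3[of 1 a b c] coeff3[of 2 a b c]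
  by (simp_all add: cp_def fps_eq_iff del: One_nat_def)

definition Nm :: "rat fps \<Rightarrow> rat fps" where
  "Nm g = cp 0 g ^ 3 + fps_X * cp 1 g ^ 3 + fps_X ^ 2 * cp 2 g ^ 3 - 3 * fps_X * cp 0 g * cp 1 g * cp 2 g"

lemma Nm_of:
  assumes "g = up3 a + fps_X * up3 b + fps_X ^ 2 * up3 c"
  shows "Nm g = a ^ 3 + fps_X * b ^ 3 + fps_X ^ 2 * c ^ 3 - 3 * fps_X * a * b * c"
  using uniq[OF assms] by (simp add: Nm_def)

lemma mult_decomp:
  fixes a b c d e f :: "rat fps"
  shows "(up3 a + fps_X * up3 b + fps_X ^ 2 * up3 c) * (up3 d + fps_X * up3 e + fps_X ^ 2 * up3 f)
    = up3 (a * d + fps_X * (b * f + c * e)) + fps_X * up3 (a * e + b * d + fps_X * c * f)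
      + fps_X ^ 2 * up3 (a * f + b * e + c * d)"
proof -
  have r: "(A + x * B + x ^ 2 * C) * (D + x * E + x ^ 2 * F) =
    (A * D + x ^ 3 * (B * F + C * E)) + x * (A * E + B * D + x ^ 3 * C * F) + x ^ 2 * (A * F + B * E + C * D)"
    for A B C D E F x :: "rat fps"
    by (simp add: algebra_simps power3_eq_cube power2_eq_square)
  show ?thesis by (simp only: r up3_simps)
qed

lemma norm_poly:
  fixes a b c d e f x :: "'a::comm_ring_1"
  shows "(a * d + x * (b * f + c * e)) ^ 3 + x * (a * e + b * d + x * c * f) ^ 3
     + x ^ 2 * (a * f + b * e + c * d) ^ 3
     - 3 * x * (a * d + x * (b * f + c * e)) * (a * e + b * d + x * c * f) * (a * f + b * e + c * d)
   = (a ^ 3 + x * b ^ 3 + x ^ 2 * c ^ 3 - 3 * x * a * b * c) * (d ^ 3 + x * e ^ 3 + x ^ 2 * f ^ 3 - 3 * x * d * e * f)"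
  by (simp add: algebra_simps power3_eq_cube power2_eq_square)

lemma Nm_mult: "Nm (g * h) = Nm g * Nm h"
proof -
  have "g * h = up3 (cp 0 g * cp 0 h + fps_X * (cp 1 g * cp 2 h + cp 2 g * cp 1 h))
      + fps_X * up3 (cp 0 g * cp 1 h + cp 1 g * cp 0 h + fps_X * cp 2 g * cp 2 h)
      + fps_X ^ 2 * up3 (cp 0 g * cp 2 h + cp 1 g * cp 1 h + cp 2 g * cp 0 h)"
    by (subst decomp[of g], subst decomp[of h], rule mult_decomp)
  from Nm_of[OF this] show ?thesis by (simp add: Nm_def norm_poly)
qed

lemma Nm_one[simp]: "Nm 1 = 1"
proof -
  have "(1::rat fps) = up3 1 + fps_X * up3 0 + fps_X ^ 2 * up3 0" by simp
  from Nm_of[OF this] show ?thesis by simp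
qed

lemma Nm_prod: "finite S \<Longrightarrow> Nm (prod f S) = (\<Prod>k\<in>S. Nm (f k))"
  by (induction S rule: finite_induct) (simp_all add: Nm_mult)

lemma Nm_power: "Nm (g ^ k) = Nm g ^ k"
  by (induction k) (simp_all add: Nm_mult)

lemma Nm_factor: "Nm (1 - fps_X ^ j) = (if 3 dvd j then (1 - fps_X ^ (j div 3)) ^ 3 else 1 - fps_X ^ j)"
proof -
  obtain m r where j: "j = 3 * m + r" and r: "r < 3" by (metis div_mod_decomp mult.commute mod_less_divisor zero_less_numeral)
  have "r = 0 \<or> r = 1 \<or> r = 2" using r by auto
  thus ?thesis
  proof (elim disjE)
    assume "r = 0"
    hence "1 - fps_X ^ j = up3 (1 - fps_X ^ m) + fps_X * up3 0 + fps_X ^ 2 * up3 0"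
      using j by (simp add: up3_simps power_mult)
    from Nm_of[OF this] show ?thesis using \<open>r = 0\<close> j by simp
  next
    assume "r = 1"
    hence "1 - fps_X ^ j = up3 1 + fps_X * up3 (- (fps_X ^ m)) + fps_X ^ 2 * up3 0"
      using j by (simp add: up3_simps power_mult power_add)
    note N = Nm_of[OF this]
    have nd: "\<not> 3 dvd j" using j \<open>r = 1\<close> by presburger
    have "(1::rat fps) ^ 3 + fps_X * (- (fps_X ^ m)) ^ 3 + fps_X ^ 2 * 0 ^ 3 - 3 * fps_X * 1 * (- (fps_X ^ m)) * 0
        = 1 - fps_X ^ j" using j \<open>r = 1\<close> by (simp add: power_mult[symmetric] power_add mult.commute)
    with N nd show ?thesis by simp
  next
    assume "r = 2"
    hence "1 - fps_X ^ j = up3 1 + fps_X * up3 0 + fps_X ^ 2 * up3 (- (fps_X ^ m))"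
      using j by (simp add: up3_simps power_mult power_add power2_eq_square)
    note N = Nm_of[OF this]
    have nd: "\<not> 3 dvd j" using j \<open>r = 2\<close> by presburger
    have "(1::rat fps) ^ 3 + fps_X * 0 ^ 3 + fps_X ^ 2 * (- (fps_X ^ m)) ^ 3 - 3 * fps_X * 1 * 0 * (- (fps_X ^ m))
        = 1 - fps_X ^ j" using j \<open>r = 2\<close> by (simp add: power_mult[symmetric] power_add mult.commute power2_eq_square)
    with N nd show ?thesis by simp
  qed
qed



lemma cg_cp: "r < 3 \<Longrightarrow> cg (3 * n) g h \<Longrightarrow> cg n (cp r g) (cp r h)"
  unfolding cg_def cp_def by auto

lemma cg_Nm: "cg (3 * n) g h \<Longrightarrow> cg n (Nm g) (Nm h)"
  unfolding Nm_def
  by (intro cg_add cg_diff cg_mult cg_power cg_cp cg_refl) simp_all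

lemma P_Suc: "P m (Suc n) = P m n * (1 - fps_X ^ (m * Suc n))"
  unfolding P_def by (simp add: prod.nat_ivl_Suc')

lemma NP:
  assumes "\<not> 3 dvd m"
  shows "Nm (P m (3 * M)) * P (3 * m) M = P m (3 * M) * P m M ^ 3"
proof (induction M)
  case 0
  then show ?case by (simp add: P_def)
next
  case (Suc M)
  have e: "3 * Suc M = Suc (Suc (Suc (3 * M)))" by simp
  obtain k where k: "m * M = k" by simp
  have e1: "m * Suc (3 * M) = m + 3 * k" and e2: "m * Suc (Suc (3 * M)) = 2 * m + 3 * k" using k by simp_all
  have "\<not> 3 dvd m + 3 * k" "\<not> 3 dvd 2 * m + 3 * k" using assms by presburger+
  hence d1: "\<not> 3 dvd m * Suc (3 * M)" and d2: "\<not> 3 dvd m * Suc (Suc (3 * M))"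
    by (simp_all only: e1 e2 not_False_eq_True)
  have d3: "3 dvd m * Suc (Suc (Suc (3 * M)))" and d3': "m * Suc (Suc (Suc (3 * M))) div 3 = m * Suc M"
    by simp_all
  define f1 where "f1 = (1::rat fps) - fps_X ^ (m * Suc (3 * M))"
  define f2 where "f2 = (1::rat fps) - fps_X ^ (m * Suc (Suc (3 * M)))"
  define f3 where "f3 = (1::rat fps) - fps_X ^ (m * Suc (Suc (Suc (3 * M))))"
  define g where "g = (1::rat fps) - fps_X ^ (m * Suc M)"
  have Pm: "P m (3 * Suc M) = P m (3 * M) * f1 * f2 * f3"
    unfolding e f1_def f2_def f3_def by (simp only: P_Suc)
  have N1: "Nm f1 = f1" unfolding f1_def using d1 by (simp add: Nm_factor)
  have N2: "Nm f2 = f2" unfolding f2_def using d2 by (simp add: Nm_factor)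
  have N3: "Nm f3 = g ^ 3" unfolding f3_def g_def using d3 d3' by (simp add: Nm_factor)
  have P3: "P (3 * m) (Suc M) = P (3 * m) M * f3"
    unfolding f3_def by (simp add: P_Suc)
  have Pm1: "P m (Suc M) = P m M * g" unfolding g_def by (simp add: P_Suc)
  have "Nm (P m (3 * Suc M)) * P (3 * m) (Suc M)
      = (Nm (P m (3 * M)) * P (3 * m) M) * f1 * f2 * g ^ 3 * f3"
    by (simp only: Pm P3 Nm_mult N1 N2 N3) (simp only: ac_simps)
  also have "\<dots> = P m (3 * Suc M) * P m (Suc M) ^ 3"
    by (simp only: Suc Pm Pm1 power_mult_distrib) (simp only: ac_simps)
  finally show ?case .
qed

lemma eulerE_at1: "eulerE_at 1 = eulerE"
  by (simp add: eulerE_at_def)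

lemma up_eulerE_at: "m > 0 \<Longrightarrow> k > 0 \<Longrightarrow> eulerE_at m oo fps_X ^ k = eulerE_at (m * k)"
  unfolding eulerE_at_def
  by (subst fps_compose_assoc[symmetric]) (simp_all add: up_Xpow mult.commute)

lemma Nm_E:
  assumes "\<not> 3 dvd m" "m > 0"
  shows "Nm (eulerE_at m) * eulerE_at (3 * m) = eulerE_at m ^ 4"
proof (rule cg_eq)
  fix M :: nat
  have c1: "cg (3 * M) (eulerE_at m) (P m (3 * M))"
  proof (rule cg_mono[OF _ cg_eulerE_at[OF assms(2), of "3 * M"]])
    show "3 * M \<le> m * Suc (3 * M)" using assms(2) by (cases m) auto
  qed
  have c2: "cg M (eulerE_at (3 * m)) (P (3 * m) M)"
  proof (rule cg_mono[OF _ cg_eulerE_at[of "3 * m" M]])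
    have "1 \<le> 3 * m" using assms(2) by simp
    hence "1 * Suc M \<le> 3 * m * Suc M" by (rule mult_le_mono1)
    thus "M \<le> 3 * m * Suc M" by simp
  qed (use assms(2) in simp)
  have c3: "cg M (eulerE_at m) (P m M)"
  proof (rule cg_mono[OF _ cg_eulerE_at[OF assms(2), of M]])
    have "1 \<le> m" using assms(2) by simp
    hence "1 * Suc M \<le> m * Suc M" by (rule mult_le_mono1)
    thus "M \<le> m * Suc M" by simp
  qed
  have c4: "cg M (eulerE_at m) (P m (3 * M))"
    using cg_mono[OF _ c1] by simp
  have "cg M (Nm (eulerE_at m) * eulerE_at (3 * m)) (Nm (P m (3 * M)) * P (3 * m) M)"
    by (intro cg_mult cg_Nm c1 c2)
  also have "Nm (P m (3 * M)) * P (3 * m) M = P m (3 * M) * P m M ^ 3" by (rule NP[OF assms(1)])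
  finally have "cg M (Nm (eulerE_at m) * eulerE_at (3 * m)) (P m (3 * M) * P m M ^ 3)" .
  moreover have "cg M (P m (3 * M) * P m M ^ 3) (eulerE_at m * eulerE_at m ^ 3)"
    by (intro cg_mult cg_power) (simp_all add: cg_sym c3 c4)
  moreover have "eulerE_at m * eulerE_at m ^ 3 = eulerE_at m ^ 4" by (simp add: eval_nat_numeral)
  ultimately show "cg M (Nm (eulerE_at m) * eulerE_at (3 * m)) (eulerE_at m ^ 4)"
    by (metis cg_trans)
qed



lemma sq_mod3: "(j::int) ^ 2 mod 3 = ((j mod 3) ^ 2) mod 3"
  by (simp add: power_mod)

lemma sq_mod3_cases: "(j::int) ^ 2 mod 3 = 0 \<and> j mod 3 = 0 \<or> (j::int) ^ 2 mod 3 = 1"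
proof -
  have s: "j ^ 2 mod 3 = ((j mod 3) ^ 2) mod 3" by (rule sq_mod3)
  have "j mod 3 = 0 \<or> j mod 3 = 1 \<or> j mod 3 = 2" by auto
  thus ?thesis
  proof (elim disjE)
    assume r: "j mod 3 = 0" show ?thesis using s unfolding r by simp
  next
    assume r: "j mod 3 = 1" show ?thesis using s unfolding r by simp
  next
    assume r: "j mod 3 = 2" show ?thesis using s unfolding r by (simp add: power2_eq_square)
  qed
qed

lemma sq_not2: "(j::int) ^ 2 \<noteq> 3 * k + 2"
proof
  assume h: "j ^ 2 = 3 * k + 2"
  hence "j ^ 2 mod 3 = 2" by simp
  thus False using sq_mod3_cases[of j] by simp
qed

lemma sq_dvd3: "3 dvd (j::int) ^ 2 \<Longrightarrow> 3 dvd j"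
proof -
  assume h: "3 dvd j ^ 2"
  hence "j ^ 2 mod 3 = 0" by simp
  hence "j mod 3 = 0" using sq_mod3_cases[of j] by simp
  thus ?thesis by auto
qed

lemma cp2_theta: "cp 2 theta = 0"
proof (rule fps_ext)
  fix n :: nat
  have "theta $ (3 * n + 2) = 0"
    unfolding theta_def fps_nth_Abs_fps
  proof (rule sum.neutral, rule ballI)
    fix j :: int
    have "j ^ 2 \<noteq> int (3 * n + 2)" using sq_not2[of j "int n"] by simp
    thus "(if j ^ 2 = int (3 * n + 2) then (-1) ^ nat \<bar>j\<bar> else (0::rat)) = 0" by simp
  qed
  thus "cp 2 theta $ n = 0 $ n" by (simp add: cp_def)
qed

lemma theta_9: "theta $ (9 * m) = theta $ m"
proof -
  let ?s = "\<lambda>j::int. if j ^ 2 = int (9 * m) then (-1) ^ nat \<bar>j\<bar> else (0::rat)"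
  have "theta $ (9 * m) = (\<Sum>j\<in>{-int (9 * m)..int (9 * m)}. ?s j)"
    unfolding theta_def by simp
  also have "\<dots> = (\<Sum>j\<in>(\<lambda>t. 3 * t) ` {-int (3 * m)..int (3 * m)}. ?s j)"
  proof (rule sum.mono_neutral_right)
    show "(\<lambda>t. 3 * t) ` {-int (3 * m)..int (3 * m)} \<subseteq> {-int (9 * m)..int (9 * m)}" by auto
    show "\<forall>j\<in>{-int (9 * m)..int (9 * m)} - (\<lambda>t. 3 * t) ` {-int (3 * m)..int (3 * m)}. ?s j = 0"
    proof
      fix j assume j: "j \<in> {-int (9 * m)..int (9 * m)} - (\<lambda>t. 3 * t) ` {-int (3 * m)..int (3 * m)}"
      show "?s j = 0"
      proof (rule ccontr)
        assume "?s j \<noteq> 0"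
        hence sq: "j ^ 2 = int (9 * m)" by (simp split: if_splits)
        have e: "j ^ 2 = 3 * (3 * int m)" using sq by simp
        have "3 dvd j ^ 2" unfolding e by (rule dvd_triv_left)
        hence "3 dvd j" by (rule sq_dvd3)
        then obtain t where t: "j = 3 * t" by auto
        have "t \<in> {-int (3 * m)..int (3 * m)}" using j t by auto
        hence "j \<in> (\<lambda>t. 3 * t) ` {-int (3 * m)..int (3 * m)}" using t by blast
        thus False using j by blast
      qed
    qed
  qed simp
  also have "\<dots> = (\<Sum>t\<in>{-int (3 * m)..int (3 * m)}. ?s (3 * t))"
    by (rule sum.reindex_cong[where l = "\<lambda>t. 3 * t"]) (auto simp: inj_on_def)
  also have "\<dots> = (\<Sum>t\<in>{-int (3 * m)..int (3 * m)}. if t ^ 2 = int m then (-1) ^ nat \<bar>t\<bar> else 0)"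
  proof (intro sum.cong refl)
    fix t :: int
    have e1: "((3 * t) ^ 2 = int (9 * m)) = (t ^ 2 = int m)" by (simp add: power_mult_distrib)
    have "nat \<bar>3 * t\<bar> = 3 * nat \<bar>t\<bar>" by (simp add: abs_mult nat_mult_distrib)
    hence e2: "((-1::rat) ^ nat \<bar>3 * t\<bar>) = (-1) ^ nat \<bar>t\<bar>"
      by (simp add: power_mult)
    show "?s (3 * t) = (if t ^ 2 = int m then (-1) ^ nat \<bar>t\<bar> else 0)"
      by (simp only: e1 e2)
  qed
  also have "\<dots> = theta $ m" by (rule theta_ext[symmetric]) simp
  finally show ?thesis .
qed

lemma cp0_theta: "cp 0 theta = up3 theta"
proof (rule fps_ext)
  fix n :: nat
  show "cp 0 theta $ n = up3 theta $ n"
  proof (cases "3 dvd n")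
    case True
    then obtain m where "n = 3 * m" by auto
    then show ?thesis using theta_9[of m] by (simp add: cp_def up3_nth)
  next
    case False
    have "theta $ (3 * n) = 0"
      unfolding theta_def fps_nth_Abs_fps
    proof (rule sum.neutral, rule ballI)
      fix j assume "j \<in> {- int (3 * n)..int (3 * n)}"
      show "(if j ^ 2 = int (3 * n) then (-1) ^ nat \<bar>j\<bar> else (0::rat)) = 0"
      proof (rule ccontr)
        assume "(if j ^ 2 = int (3 * n) then (-1) ^ nat \<bar>j\<bar> else (0::rat)) \<noteq> 0"
        hence sq: "j ^ 2 = int (3 * n)" by (simp split: if_splits)
        have e: "j ^ 2 = 3 * int n" using sq by simp
        have "3 dvd j ^ 2" unfolding e by (rule dvd_triv_left)
        hence "3 dvd j" by (rule sq_dvd3)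
        then obtain t where "j = 3 * t" by auto
        with sq have "int n = 3 * t ^ 2" by (simp add: power_mult_distrib)
        hence "(3::int) dvd int n" by simp
        hence "3 dvd n" by presburger
        with False show False ..
      qed
    qed
    then show ?thesis using False by (simp add: cp_def up3_nth)
  qed
qed

lemma theta_decomp: "theta = up3 (up3 theta) + fps_X * up3 (cp 1 theta)"
  using decomp[of theta] by (simp add: cp0_theta cp2_theta)

lemma Nm_theta0: "Nm theta = up3 theta ^ 3 + fps_X * cp 1 theta ^ 3"
  by (simp add: Nm_def cp0_theta cp2_theta)

abbreviation E3 where "E3 \<equiv> eulerE_at 3"
abbreviation E6 where "E6 \<equiv> eulerE_at 6"

lemma E_nz: "eulerE_at m \<noteq> 0"
proof
  assume "eulerE_at m = 0"
  hence "eulerE_at m $ 0 = 0" by simp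
  thus False by simp
qed

lemma gauss3: "up3 theta * E6 = E3 ^ 2"
proof -
  have "up3 (theta * E2) = up3 (E1 ^ 2)" by (simp only: gauss)
  thus ?thesis by (simp add: up3_mult up3_power up_eulerE_at eulerE_at_def[of 3])
qed

lemma Nm_theta: "Nm theta * up3 theta = theta ^ 4"
proof -
  have "Nm (eulerE_at 1) * eulerE_at (3 * 1) = eulerE_at 1 ^ 4" by (rule Nm_E) simp_all
  hence n1: "Nm E1 * E3 = E1 ^ 4" by (simp only: eulerE_at1 mult_1_right)
  have n2: "Nm E2 * E6 = E2 ^ 4" using Nm_E[of 2] by simp
  have a: "Nm theta * Nm E2 = Nm E1 ^ 2" by (simp only: Nm_mult[symmetric] Nm_power[symmetric] gauss)
  have "(Nm theta * up3 theta) * (E2 ^ 4 * E6) = Nm theta * (Nm E2 * E6) * (up3 theta * E6)"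
    by (simp only: n2[symmetric]) (simp only: ac_simps)
  also have "\<dots> = (Nm theta * Nm E2) * E6 * E3 ^ 2" by (simp only: gauss3[symmetric]) (simp only: ac_simps)
  also have "\<dots> = (Nm E1 * E3) ^ 2 * E6" by (simp only: a power_mult_distrib) (simp only: ac_simps)
  also have "\<dots> = (E1 ^ 2) ^ 4 * E6" by (simp only: n1 power_mult[symmetric]) (simp add: mult.commute)
  also have "\<dots> = theta ^ 4 * (E2 ^ 4 * E6)" by (simp only: gauss[symmetric] power_mult_distrib ac_simps)
  finally have "(Nm theta * up3 theta) * (E2 ^ 4 * E6) = theta ^ 4 * (E2 ^ 4 * E6)" .
  moreover have "E2 ^ 4 * E6 \<noteq> 0" using E_nz by simp
  ultimately show ?thesis by simp
qed

lemma theta0: "theta $ 0 = 1"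
  by (simp add: theta_def)

lemma Xser_theta: "Xser = up3 theta ^ 4 * inverse theta ^ 4"
proof -
  have i: "inverse (eulerE_at m) * eulerE_at m = 1" for m by (simp add: inverse_mult_eq_1)
  have "Xser = E2 ^ 4 * (up3 theta * E6) ^ 4 * inverse ((theta * E2) ^ 4 * E6 ^ 4)"
    unfolding Xser_def by (simp only: gauss3 gauss eulerE_at1 power_mult[symmetric]) simp
  also have "\<dots> = up3 theta ^ 4 * inverse theta ^ 4 * (inverse E2 * E2) ^ 4 * (inverse E6 * E6) ^ 4"
    by (simp add: fps_inverse_mult fps_inverse_power power_mult_distrib ac_simps)
  also have "\<dots> = up3 theta ^ 4 * inverse theta ^ 4" by (simp only: i) simp
  finally show ?thesis .
qed



lemma cp0_up_mult: "cp 0 (up3 g * h) = g * cp 0 h"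
proof -
  have "up3 g * h = up3 (g * cp 0 h) + fps_X * up3 (g * cp 1 h) + fps_X ^ 2 * up3 (g * cp 2 h)"
    by (subst decomp[of h]) (simp add: up3_mult algebra_simps)
  thus ?thesis by (rule uniq)
qed

lemma cp0_form: "cp 0 (up3 r0 + fps_X * up3 r1 + fps_X ^ 2 * up3 r2) = r0"
  by (rule uniq) (rule refl)

lemma opU_cp0: "opU f = cp 0 f"
  by (simp add: opU_def cp_def)

lemma up3_0: "up3 g $ 0 = g $ 0" by simp

definition vv where "vv = up3 theta"
definition bb where "bb = cp 1 theta"
definition NN where "NN = Nm theta"
definition ww where "ww = fps_X * bb ^ 3"

lemma vv0: "vv $ 0 = 1" by (simp add: vv_def theta0)

lemma NN_vv: "NN * vv = theta ^ 4" using Nm_theta by (simp add: NN_def vv_def)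
lemma NN_ww: "NN = vv ^ 3 + ww" using Nm_theta0 by (simp add: NN_def vv_def ww_def bb_def)

lemma NN0: "NN $ 0 = 1"
proof -
  have "(NN * vv) $ 0 = 1" by (simp add: NN_vv theta0 fps_power_zeroth)
  thus ?thesis using vv0 by simp
qed

definition tstar where "tstar = up3 vv ^ 2 - up3 vv * (fps_X * up3 bb) + (fps_X * up3 bb) ^ 2"

lemma theta_AY: "theta = up3 vv + fps_X * up3 bb"
  using theta_decomp by (simp add: vv_def bb_def)

lemma theta_tstar: "theta * tstar = up3 NN"
proof -
  have r: "(a + y) * (a ^ 2 - a * y + y ^ 2) = a ^ 3 + y ^ 3" for a y :: "rat fps"
    by (simp add: algebra_simps power2_eq_square power3_eq_cube)
  have "theta * tstar = up3 vv ^ 3 + (fps_X * up3 bb) ^ 3"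
    unfolding tstar_def by (subst theta_AY) (rule r)
  also have "\<dots> = up3 (vv ^ 3 + ww)"
    by (simp add: ww_def up3_simps power_mult_distrib)
  finally show ?thesis by (simp add: NN_ww)
qed

lemma inv_theta: "inverse theta = tstar * up3 (inverse NN)"
proof -
  have "up3 NN * up3 (inverse NN) = 1"
    by (simp only: up3_mult[symmetric] inverse_mult_eq_1' NN0) (simp add: NN0 inverse_mult_eq_1')
  hence "theta * (tstar * up3 (inverse NN)) = 1" by (simp add: theta_tstar mult.assoc[symmetric])
  hence "inverse theta * (theta * (tstar * up3 (inverse NN))) = inverse theta" by simp
  thus ?thesis by (simp add: mult.assoc[symmetric] inverse_mult_eq_1 theta0)
qed

lemma structural:
  fixes Ra Rb Rc :: "rat fps \<Rightarrow> rat fps \<Rightarrow> rat fps"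
  assumes poly: "\<And>x y. (x ^ 2 - x * y + y ^ 2) ^ (4 * k) = Ra x (y ^ 3) + y * Rb x (y ^ 3) + y ^ 2 * Rc x (y ^ 3)"
    and h0: "\<And>a c. up3 (Ra a c) = Ra (up3 a) (up3 c)"
    and h1: "\<And>a c. up3 (Rb a c) = Rb (up3 a) (up3 c)"
    and h2: "\<And>a c. up3 (Rc a c) = Rc (up3 a) (up3 c)"
  shows "opU (Xser ^ k) = theta ^ (4 * k) * inverse NN ^ (4 * k) * Ra vv ww"
proof -
  have "Xser ^ k = up3 (theta ^ (4 * k)) * (tstar ^ (4 * k) * up3 (inverse NN ^ (4 * k)))"
    unfolding Xser_theta inv_theta
    by (simp add: up3_power power_mult_distrib power_mult[symmetric] mult.commute[of 4] ac_simps)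
  hence "opU (Xser ^ k) = theta ^ (4 * k) * cp 0 (up3 (inverse NN ^ (4 * k)) * tstar ^ (4 * k))"
    by (simp add: opU_cp0 cp0_up_mult mult.commute[of "tstar ^ _"])
  also have "\<dots> = theta ^ (4 * k) * (inverse NN ^ (4 * k) * cp 0 (tstar ^ (4 * k)))"
    by (simp only: cp0_up_mult)
  also have "tstar ^ (4 * k) = up3 (Ra vv ww) + fps_X * up3 (bb * Rb vv ww) + fps_X ^ 2 * up3 (bb ^ 2 * Rc vv ww)"
  proof -
    have "(fps_X * up3 bb) ^ 3 = up3 ww" by (simp add: ww_def up3_simps power_mult_distrib)
    moreover have "(fps_X * up3 bb) ^ 2 = fps_X ^ 2 * up3 (bb ^ 2)" by (simp add: up3_simps power_mult_distrib)
    ultimately show ?thesis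
      unfolding tstar_def poly by (simp only: h0 h1 h2 up3_mult) (simp add: ac_simps)
  qed
  also have "cp 0 (up3 (Ra vv ww) + fps_X * up3 (bb * Rb vv ww) + fps_X ^ 2 * up3 (bb ^ 2 * Rc vv ww)) = Ra vv ww"
    by (rule cp0_form)
  finally show ?thesis by (simp add: ac_simps)
qed



lemma thT: "theta * inverse theta = 1" by (simp add: inverse_mult_eq_1' theta0)

lemma Ni: "inverse NN = vv * inverse theta ^ 4"
proof -
  have "NN * (vv * inverse theta ^ 4) = (theta * inverse theta) ^ 4"
    by (simp only: mult.assoc[symmetric] NN_vv power_mult_distrib)
  hence e: "NN * (vv * inverse theta ^ 4) = 1" by (simp add: thT)
  have "inverse NN = inverse NN * (NN * (vv * inverse theta ^ 4))" by (simp add: e)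
  also have "\<dots> = vv * inverse theta ^ 4" by (simp add: mult.assoc[symmetric] inverse_mult_eq_1 NN0)
  finally show ?thesis .
qed

lemma coef: "theta ^ (4 * k) * inverse NN ^ (4 * k) = inverse theta ^ (12 * k) * vv ^ (4 * k)"
proof -
  have "theta ^ 4 * inverse NN ^ 4 = inverse theta ^ 12 * vv ^ 4"
    unfolding Ni using thT by algebra
  hence "(theta ^ 4 * inverse NN ^ 4) ^ k = (inverse theta ^ 12 * vv ^ 4) ^ k" by simp
  thus ?thesis by (simp add: power_mult power_mult_distrib)
qed

lemma vw: "vv * ww = theta ^ 4 - vv ^ 4"
proof -
  have "vv * ww = vv * NN - vv ^ 4" by (simp add: NN_ww algebra_simps power3_eq_cube power4_eq_xxxx)
  thus ?thesis by (simp add: NN_vv mult.commute)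
qed

lemma XT: "vv ^ 4 * inverse theta ^ 4 = Xser"
  by (simp add: Xser_theta vv_def)

lemma Z1: "inverse theta ^ 4 * (theta ^ 4 - vv ^ 4) = 1 - Xser"
proof -
  have "inverse theta ^ 4 * (theta ^ 4 - vv ^ 4) = (theta * inverse theta) ^ 4 - vv ^ 4 * inverse theta ^ 4"
    by (simp add: algebra_simps power_mult_distrib)
  thus ?thesis by (simp add: thT XT)
qed

lemma final1: "opU (Xser ^ 1) = 10 * Xser - 36 * Xser ^ 2 + 27 * Xser ^ 3"
proof -
  have e4: "(4::nat) * 1 = 4" by simp
  have s: "opU (Xser ^ 1) = theta ^ (4 * 1) * inverse NN ^ (4 * 1) * (vv ^ 8 - 16 * vv ^ 5 * ww + 10 * vv ^ 2 * ww ^ 2)"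
    by (rule structural[where Ra = "\<lambda>x z. (x ^ 8 - 16 * x ^ 5 * z + 10 * x ^ 2 * z ^ 2)" and Rb = "\<lambda>x z. (- 4 * x ^ 7 + 19 * x ^ 4 * z - 4 * x * z ^ 2)" and Rc = "\<lambda>x z. (10 * x ^ 6 - 16 * x ^ 3 * z + z ^ 2)"])
       (unfold e4, algebra, (simp only: up3_simps numeral_compose neg_numeral_compose)+)
  have e12: "(12::nat) * 1 = 12" by simp
  have cf: "theta ^ 4 * inverse NN ^ 4 = inverse theta ^ 12 * vv ^ 4"
    using coef[of 1] by (simp only: e4 e12)
  have a: "vv ^ 4 * (vv ^ 8 - 16 * vv ^ 5 * ww + 10 * vv ^ 2 * ww ^ 2) = (vv ^ 12 - 16 * vv ^ 8 * (vv * ww) + 10 * vv ^ 4 * (vv * ww) ^ 2)"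
    by algebra
  have b: "T ^ 12 * (vv ^ 12 - 16 * vv ^ 8 * D + 10 * vv ^ 4 * D ^ 2) = ((vv ^ 4 * T ^ 4) ^ 3 - 16 * (vv ^ 4 * T ^ 4) ^ 2 * (T ^ 4 * D) + 10 * (vv ^ 4 * T ^ 4) * (T ^ 4 * D) ^ 2)" for T D :: "rat fps"
    by algebra
  have c: "(y ^ 3 - 16 * y ^ 2 * (1 - y) + 10 * y * (1 - y) ^ 2) = 10 * y - 36 * y ^ 2 + 27 * y ^ 3" for y :: "rat fps"
    by algebra
  have "opU (Xser ^ 1) = inverse theta ^ 12 * (vv ^ 4 * (vv ^ 8 - 16 * vv ^ 5 * ww + 10 * vv ^ 2 * ww ^ 2))"
    by (simp only: s e4 cf) (simp only: ac_simps)
  also have "\<dots> = inverse theta ^ 12 * (vv ^ 12 - 16 * vv ^ 8 * (theta ^ 4 - vv ^ 4) + 10 * vv ^ 4 * (theta ^ 4 - vv ^ 4) ^ 2)"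
    by (simp only: a vw)
  also have "\<dots> = ((vv ^ 4 * inverse theta ^ 4) ^ 3 - 16 * (vv ^ 4 * inverse theta ^ 4) ^ 2 * (inverse theta ^ 4 * (theta ^ 4 - vv ^ 4)) + 10 * (vv ^ 4 * inverse theta ^ 4) * (inverse theta ^ 4 * (theta ^ 4 - vv ^ 4)) ^ 2)"
    by (rule b)
  also have "\<dots> = 10 * Xser - 36 * Xser ^ 2 + 27 * Xser ^ 3"
    by (simp only: XT Z1 c)
  finally show ?thesis .
qed

lemma final2: "opU (Xser ^ 2) = - 8 * Xser + 306 * Xser ^ 2 - 2160 * Xser ^ 3 + 5508 * Xser ^ 4 - 5832 * Xser ^ 5 + 2187 * Xser ^ 6"
proof -
  have e4: "(4::nat) * 2 = 8" by simp
  have s: "opU (Xser ^ 2) = theta ^ (4 * 2) * inverse NN ^ (4 * 2) * (vv ^ 16 - 112 * vv ^ 13 * ww + 784 * vv ^ 10 * ww ^ 2 - 1016 * vv ^ 7 * ww ^ 3 + 266 * vv ^ 4 * ww ^ 4 - 8 * vv * ww ^ 5)"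
    by (rule structural[where Ra = "\<lambda>x z. (x ^ 16 - 112 * x ^ 13 * z + 784 * x ^ 10 * z ^ 2 - 1016 * x ^ 7 * z ^ 3 + 266 * x ^ 4 * z ^ 4 - 8 * x * z ^ 5)" and Rb = "\<lambda>x z. (- 8 * x ^ 15 + 266 * x ^ 12 * z - 1016 * x ^ 9 * z ^ 2 + 784 * x ^ 6 * z ^ 3 - 112 * x ^ 3 * z ^ 4 + z ^ 5)" and Rc = "\<lambda>x z. (36 * x ^ 14 - 504 * x ^ 11 * z + 1107 * x ^ 8 * z ^ 2 - 504 * x ^ 5 * z ^ 3 + 36 * x ^ 2 * z ^ 4)"])
       (unfold e4, algebra, (simp only: up3_simps numeral_compose neg_numeral_compose)+)
  have e12: "(12::nat) * 2 = 24" by simp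
  have cf: "theta ^ 8 * inverse NN ^ 8 = inverse theta ^ 24 * vv ^ 8"
    using coef[of 2] by (simp only: e4 e12)
  have a: "vv ^ 8 * (vv ^ 16 - 112 * vv ^ 13 * ww + 784 * vv ^ 10 * ww ^ 2 - 1016 * vv ^ 7 * ww ^ 3 + 266 * vv ^ 4 * ww ^ 4 - 8 * vv * ww ^ 5) = (vv ^ 24 - 112 * vv ^ 20 * (vv * ww) + 784 * vv ^ 16 * (vv * ww) ^ 2 - 1016 * vv ^ 12 * (vv * ww) ^ 3 + 266 * vv ^ 8 * (vv * ww) ^ 4 - 8 * vv ^ 4 * (vv * ww) ^ 5)"
    by algebra
  have b: "T ^ 24 * (vv ^ 24 - 112 * vv ^ 20 * D + 784 * vv ^ 16 * D ^ 2 - 1016 * vv ^ 12 * D ^ 3 + 266 * vv ^ 8 * D ^ 4 - 8 * vv ^ 4 * D ^ 5) = ((vv ^ 4 * T ^ 4) ^ 6 - 112 * (vv ^ 4 * T ^ 4) ^ 5 * (T ^ 4 * D) + 784 * (vv ^ 4 * T ^ 4) ^ 4 * (T ^ 4 * D) ^ 2 - 1016 * (vv ^ 4 * T ^ 4) ^ 3 * (T ^ 4 * D) ^ 3 + 266 * (vv ^ 4 * T ^ 4) ^ 2 * (T ^ 4 * D) ^ 4 - 8 * (vv ^ 4 * T ^ 4) * (T ^ 4 * D) ^ 5)" for T D :: "rat fps"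
    by algebra
  have c: "(y ^ 6 - 112 * y ^ 5 * (1 - y) + 784 * y ^ 4 * (1 - y) ^ 2 - 1016 * y ^ 3 * (1 - y) ^ 3 + 266 * y ^ 2 * (1 - y) ^ 4 - 8 * y * (1 - y) ^ 5) = - 8 * y + 306 * y ^ 2 - 2160 * y ^ 3 + 5508 * y ^ 4 - 5832 * y ^ 5 + 2187 * y ^ 6" for y :: "rat fps"
    by algebra
  have "opU (Xser ^ 2) = inverse theta ^ 24 * (vv ^ 8 * (vv ^ 16 - 112 * vv ^ 13 * ww + 784 * vv ^ 10 * ww ^ 2 - 1016 * vv ^ 7 * ww ^ 3 + 266 * vv ^ 4 * ww ^ 4 - 8 * vv * ww ^ 5))"
    by (simp only: s e4 cf) (simp only: ac_simps)
  also have "\<dots> = inverse theta ^ 24 * (vv ^ 24 - 112 * vv ^ 20 * (theta ^ 4 - vv ^ 4) + 784 * vv ^ 16 * (theta ^ 4 - vv ^ 4) ^ 2 - 1016 * vv ^ 12 * (theta ^ 4 - vv ^ 4) ^ 3 + 266 * vv ^ 8 * (theta ^ 4 - vv ^ 4) ^ 4 - 8 * vv ^ 4 * (theta ^ 4 - vv ^ 4) ^ 5)"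
    by (simp only: a vw)
  also have "\<dots> = ((vv ^ 4 * inverse theta ^ 4) ^ 6 - 112 * (vv ^ 4 * inverse theta ^ 4) ^ 5 * (inverse theta ^ 4 * (theta ^ 4 - vv ^ 4)) + 784 * (vv ^ 4 * inverse theta ^ 4) ^ 4 * (inverse theta ^ 4 * (theta ^ 4 - vv ^ 4)) ^ 2 - 1016 * (vv ^ 4 * inverse theta ^ 4) ^ 3 * (inverse theta ^ 4 * (theta ^ 4 - vv ^ 4)) ^ 3 + 266 * (vv ^ 4 * inverse theta ^ 4) ^ 2 * (inverse theta ^ 4 * (theta ^ 4 - vv ^ 4)) ^ 4 - 8 * (vv ^ 4 * inverse theta ^ 4) * (inverse theta ^ 4 * (theta ^ 4 - vv ^ 4)) ^ 5)"
    by (rule b)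
  also have "\<dots> = - 8 * Xser + 306 * Xser ^ 2 - 2160 * Xser ^ 3 + 5508 * Xser ^ 4 - 5832 * Xser ^ 5 + 2187 * Xser ^ 6"
    by (simp only: XT Z1 c)
  finally show ?thesis .
qed

lemma final3: "opU (Xser ^ 3) = Xser - 360 * Xser ^ 2 + 10566 * Xser ^ 3 - 99144 * Xser ^ 4 + 423549 * Xser ^ 5 - 944784 * Xser ^ 6 + 1141614 * Xser ^ 7 - 708588 * Xser ^ 8 + 177147 * Xser ^ 9"
proof -
  have e4: "(4::nat) * 3 = 12" by simp
  have s: "opU (Xser ^ 3) = theta ^ (4 * 3) * inverse NN ^ (4 * 3) * (vv ^ 24 - 352 * vv ^ 21 * ww + 8074 * vv ^ 18 * ww ^ 2 - 43252 * vv ^ 15 * ww ^ 3 + 73789 * vv ^ 12 * ww ^ 4 - 43252 * vv ^ 9 * ww ^ 5 + 8074 * vv ^ 6 * ww ^ 6 - 352 * vv ^ 3 * ww ^ 7 + ww ^ 8)"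
    by (rule structural[where Ra = "\<lambda>x z. (x ^ 24 - 352 * x ^ 21 * z + 8074 * x ^ 18 * z ^ 2 - 43252 * x ^ 15 * z ^ 3 + 73789 * x ^ 12 * z ^ 4 - 43252 * x ^ 9 * z ^ 5 + 8074 * x ^ 6 * z ^ 6 - 352 * x ^ 3 * z ^ 7 + z ^ 8)" and Rb = "\<lambda>x z. (- 12 * x ^ 23 + 1221 * x ^ 20 * z - 16236 * x ^ 17 * z ^ 2 + 58278 * x ^ 14 * z ^ 3 - 69576 * x ^ 11 * z ^ 4 + 28314 * x ^ 8 * z ^ 5 - 3432 * x ^ 5 * z ^ 6 + 78 * x ^ 2 * z ^ 7)" and Rc = "\<lambda>x z. (78 * x ^ 22 - 3432 * x ^ 19 * z + 28314 * x ^ 16 * z ^ 2 - 69576 * x ^ 13 * z ^ 3 + 58278 * x ^ 10 * z ^ 4 - 16236 * x ^ 7 * z ^ 5 + 1221 * x ^ 4 * z ^ 6 - 12 * x * z ^ 7)"])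
       (unfold e4, algebra, (simp only: up3_simps numeral_compose neg_numeral_compose)+)
  have e12: "(12::nat) * 3 = 36" by simp
  have cf: "theta ^ 12 * inverse NN ^ 12 = inverse theta ^ 36 * vv ^ 12"
    using coef[of 3] by (simp only: e4 e12)
  have a: "vv ^ 12 * (vv ^ 24 - 352 * vv ^ 21 * ww + 8074 * vv ^ 18 * ww ^ 2 - 43252 * vv ^ 15 * ww ^ 3 + 73789 * vv ^ 12 * ww ^ 4 - 43252 * vv ^ 9 * ww ^ 5 + 8074 * vv ^ 6 * ww ^ 6 - 352 * vv ^ 3 * ww ^ 7 + ww ^ 8) = (vv ^ 36 - 352 * vv ^ 32 * (vv * ww) + 8074 * vv ^ 28 * (vv * ww) ^ 2 - 43252 * vv ^ 24 * (vv * ww) ^ 3 + 73789 * vv ^ 20 * (vv * ww) ^ 4 - 43252 * vv ^ 16 * (vv * ww) ^ 5 + 8074 * vv ^ 12 * (vv * ww) ^ 6 - 352 * vv ^ 8 * (vv * ww) ^ 7 + vv ^ 4 * (vv * ww) ^ 8)"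
    by algebra
  have b: "T ^ 36 * (vv ^ 36 - 352 * vv ^ 32 * D + 8074 * vv ^ 28 * D ^ 2 - 43252 * vv ^ 24 * D ^ 3 + 73789 * vv ^ 20 * D ^ 4 - 43252 * vv ^ 16 * D ^ 5 + 8074 * vv ^ 12 * D ^ 6 - 352 * vv ^ 8 * D ^ 7 + vv ^ 4 * D ^ 8) = ((vv ^ 4 * T ^ 4) ^ 9 - 352 * (vv ^ 4 * T ^ 4) ^ 8 * (T ^ 4 * D) + 8074 * (vv ^ 4 * T ^ 4) ^ 7 * (T ^ 4 * D) ^ 2 - 43252 * (vv ^ 4 * T ^ 4) ^ 6 * (T ^ 4 * D) ^ 3 + 73789 * (vv ^ 4 * T ^ 4) ^ 5 * (T ^ 4 * D) ^ 4 - 43252 * (vv ^ 4 * T ^ 4) ^ 4 * (T ^ 4 * D) ^ 5 + 8074 * (vv ^ 4 * T ^ 4) ^ 3 * (T ^ 4 * D) ^ 6 - 352 * (vv ^ 4 * T ^ 4) ^ 2 * (T ^ 4 * D) ^ 7 + (vv ^ 4 * T ^ 4) * (T ^ 4 * D) ^ 8)" for T D :: "rat fps"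
    by algebra
  have c: "(y ^ 9 - 352 * y ^ 8 * (1 - y) + 8074 * y ^ 7 * (1 - y) ^ 2 - 43252 * y ^ 6 * (1 - y) ^ 3 + 73789 * y ^ 5 * (1 - y) ^ 4 - 43252 * y ^ 4 * (1 - y) ^ 5 + 8074 * y ^ 3 * (1 - y) ^ 6 - 352 * y ^ 2 * (1 - y) ^ 7 + y * (1 - y) ^ 8) = y - 360 * y ^ 2 + 10566 * y ^ 3 - 99144 * y ^ 4 + 423549 * y ^ 5 - 944784 * y ^ 6 + 1141614 * y ^ 7 - 708588 * y ^ 8 + 177147 * y ^ 9" for y :: "rat fps"
    by algebra
  have "opU (Xser ^ 3) = inverse theta ^ 36 * (vv ^ 12 * (vv ^ 24 - 352 * vv ^ 21 * ww + 8074 * vv ^ 18 * ww ^ 2 - 43252 * vv ^ 15 * ww ^ 3 + 73789 * vv ^ 12 * ww ^ 4 - 43252 * vv ^ 9 * ww ^ 5 + 8074 * vv ^ 6 * ww ^ 6 - 352 * vv ^ 3 * ww ^ 7 + ww ^ 8))"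
    by (simp only: s e4 cf) (simp only: ac_simps)
  also have "\<dots> = inverse theta ^ 36 * (vv ^ 36 - 352 * vv ^ 32 * (theta ^ 4 - vv ^ 4) + 8074 * vv ^ 28 * (theta ^ 4 - vv ^ 4) ^ 2 - 43252 * vv ^ 24 * (theta ^ 4 - vv ^ 4) ^ 3 + 73789 * vv ^ 20 * (theta ^ 4 - vv ^ 4) ^ 4 - 43252 * vv ^ 16 * (theta ^ 4 - vv ^ 4) ^ 5 + 8074 * vv ^ 12 * (theta ^ 4 - vv ^ 4) ^ 6 - 352 * vv ^ 8 * (theta ^ 4 - vv ^ 4) ^ 7 + vv ^ 4 * (theta ^ 4 - vv ^ 4) ^ 8)"
    by (simp only: a vw)
  also have "\<dots> = ((vv ^ 4 * inverse theta ^ 4) ^ 9 - 352 * (vv ^ 4 * inverse theta ^ 4) ^ 8 * (inverse theta ^ 4 * (theta ^ 4 - vv ^ 4)) + 8074 * (vv ^ 4 * inverse theta ^ 4) ^ 7 * (inverse theta ^ 4 * (theta ^ 4 - vv ^ 4)) ^ 2 - 43252 * (vv ^ 4 * inverse theta ^ 4) ^ 6 * (inverse theta ^ 4 * (theta ^ 4 - vv ^ 4)) ^ 3 + 73789 * (vv ^ 4 * inverse theta ^ 4) ^ 5 * (inverse theta ^ 4 * (theta ^ 4 - vv ^ 4)) ^ 4 - 43252 * (vv ^ 4 * inverse theta ^ 4) ^ 4 * (inverse theta ^ 4 * (theta ^ 4 - vv ^ 4)) ^ 5 + 8074 * (vv ^ 4 * inverse theta ^ 4) ^ 3 * (inverse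 theta ^ 4 * (theta ^ 4 - vv ^ 4)) ^ 6 - 352 * (vv ^ 4 * inverse theta ^ 4) ^ 2 * (inverse theta ^ 4 * (theta ^ 4 - vv ^ 4)) ^ 7 + (vv ^ 4 * inverse theta ^ 4) * (inverse theta ^ 4 * (theta ^ 4 - vv ^ 4)) ^ 8)"
    by (rule b)
  also have "\<dots> = Xser - 360 * Xser ^ 2 + 10566 * Xser ^ 3 - 99144 * Xser ^ 4 + 423549 * Xser ^ 5 - 944784 * Xser ^ 6 + 1141614 * Xser ^ 7 - 708588 * Xser ^ 8 + 177147 * Xser ^ 9"
    by (simp only: XT Z1 c)
  finally show ?thesis .
qed

theorem theorem2p3:
  shows "(opU Xser = 10 * Xser - 36 * Xser ^ 2 + 27 * Xser ^ 3) \<and>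
         (opU (Xser ^ 2) = - 8 * Xser + 306 * Xser ^ 2 - 2160 * Xser ^ 3 + 5508 * Xser ^ 4
                          - 5832 * Xser ^ 5 + 2187 * Xser ^ 6) \<and>
         (opU (Xser ^ 3) = Xser - 360 * Xser ^ 2 + 10566 * Xser ^ 3 - 99144 * Xser ^ 4
                          + 423549 * Xser ^ 5 - 944784 * Xser ^ 6 + 1141614 * Xser ^ 7
                          - 708588 * Xser ^ 8 + 177147 * Xser ^ 9)"
  using final1 final2 final3 by simp


end
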